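(* Let $G$ be a finite group and $K\trianglelefteq G$ a normal subgroup such that $\eta_g(K)=K$ for some $g\in G$. Then $K$ is inducible.
   Context: Commutators: $[x,y]=x^{-1}y^{-1}xy$, $x^y=y^{-1}xy$; for subsets $X,Y\subseteq G$, $[X,Y]$ is the subgroup generated by all $[x,y]$, and $[X,{}_kY]$ is the iterated commutator $[\cdots[[X,Y],Y]\cdots,Y]$ with $k$ copies of $Y$. $g^G=\{g^x:x\in G\}$. Fix $M\in\mathbb{N}$ with $[X,{}_MY]=[X,{}_iY]$ for all $i\ge M$ and all $X,Y\subseteq G$ with $X^G=X$, $Y^G=Y$; $\eta_g(K)=[K,{}_M\,g^G]$. An expression over $G$ is a word over $G\cup\mathcal{X}\cup\mathcal{X}^{-1}$ ($\mathcal{X}$ variables, $\mathcal{X}^{-1}$ formal inverses), evaluated under assignments $\sigma:\mathcal{X}\to G$ (with $\sigma(X^{-1})=\sigma(X)^{-1}$, $\sigma(g)=g$). A subset $S\subseteq G$ is inducible if there is an expression $\alpha$ with $S=\{\sigma(\alpha):\sigma:\mathcal{X}\to G\}$. *)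

theory Defs
  imports "HOL-Algebra.Algebra"
begin

definition commutator :: "('a, 'b) monoid_scheme \<Rightarrow> 'a \<Rightarrow> 'a \<Rightarrow> 'a" where
  "commutator G x y = inv\<^bsub>G\<^esub> x \<otimes>\<^bsub>G\<^esub> inv\<^bsub>G\<^esub> y \<otimes>\<^bsub>G\<^esub> x \<otimes>\<^bsub>G\<^esub> y"

definition conj_elem :: "('a, 'b) monoid_scheme \<Rightarrow> 'a \<Rightarrow> 'a \<Rightarrow> 'a" where
  "conj_elem G x y = inv\<^bsub>G\<^esub> y \<otimes>\<^bsub>G\<^esub> x \<otimes>\<^bsub>G\<^esub> y"

definition comm_set :: "('a, 'b) monoid_scheme \<Rightarrow> 'a set \<Rightarrow> 'a set \<Rightarrow> 'a set" where
  "comm_set G A B = generate G {commutator G x y | x y. x \<in> A \<and> y \<in> B}"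

fun iter_comm :: "('a, 'b) monoid_scheme \<Rightarrow> 'a set \<Rightarrow> nat \<Rightarrow> 'a set \<Rightarrow> 'a set" where
  "iter_comm G A 0 B = A"
| "iter_comm G A (Suc k) B = comm_set G (iter_comm G A k B) B"

definition conj_closure :: "('a, 'b) monoid_scheme \<Rightarrow> 'a set \<Rightarrow> 'a set" where
  "conj_closure G A = {conj_elem G x y | x y. x \<in> A \<and> y \<in> carrier G}"

definition conj_class :: "('a, 'b) monoid_scheme \<Rightarrow> 'a \<Rightarrow> 'a set" where
  "conj_class G g = {conj_elem G g y | y. y \<in> carrier G}"

definition stabilizing_bound :: "('a, 'b) monoid_scheme \<Rightarrow> nat \<Rightarrow> bool" where
  "stabilizing_bound G M \<longleftrightarrow>
     (\<forall>A B i. A \<subseteq> carrier G \<and> B \<subseteq> carrier G \<and> conj_closure G A = A \<and> conj_closure G B = B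
        \<and> i \<ge> M \<longrightarrow> iter_comm G A M B = iter_comm G A i B)"

definition eta :: "('a, 'b) monoid_scheme \<Rightarrow> nat \<Rightarrow> 'a \<Rightarrow> 'a set \<Rightarrow> 'a set" where
  "eta G M g K = iter_comm G K M (conj_class G g)"

datatype 'a letter = Const 'a | Var nat | InvVar nat

fun eval_letter :: "('a, 'b) monoid_scheme \<Rightarrow> (nat \<Rightarrow> 'a) \<Rightarrow> 'a letter \<Rightarrow> 'a" where
  "eval_letter G \<sigma> (Const g) = g"
| "eval_letter G \<sigma> (Var n) = \<sigma> n"
| "eval_letter G \<sigma> (InvVar n) = inv\<^bsub>G\<^esub> (\<sigma> n)"

fun eval_expr :: "('a, 'b) monoid_scheme \<Rightarrow> (nat \<Rightarrow> 'a) \<Rightarrow> 'a letter list \<Rightarrow> 'a" where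
  "eval_expr G \<sigma> [] = \<one>\<^bsub>G\<^esub>"
| "eval_expr G \<sigma> (l # w) = eval_letter G \<sigma> l \<otimes>\<^bsub>G\<^esub> eval_expr G \<sigma> w"

definition is_expr :: "('a, 'b) monoid_scheme \<Rightarrow> 'a letter list \<Rightarrow> bool" where
  "is_expr G \<alpha> \<longleftrightarrow> (\<forall>g. Const g \<in> set \<alpha> \<longrightarrow> g \<in> carrier G)"

definition inducible :: "('a, 'b) monoid_scheme \<Rightarrow> 'a set \<Rightarrow> bool" where
  "inducible G S \<longleftrightarrow> (\<exists>\<alpha>. is_expr G \<alpha> \<and>
      S = {eval_expr G \<sigma> \<alpha> | \<sigma>. \<sigma> \<in> UNIV \<rightarrow> carrier G})"

end

theory Submission
  imports Defs
begin

fun wrd :: "('a, 'b) monoid_scheme \<Rightarrow> nat \<Rightarrow> 'a list \<Rightarrow> 'a letter list" where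
  "wrd G off [] = []"
| "wrd G off (b # bs) = [Const (inv\<^bsub>G\<^esub> b), InvVar off, Const b, Var off] @ wrd G (Suc off) bs"

fun vals :: "('a, 'b) monoid_scheme \<Rightarrow> 'a list \<Rightarrow> 'a set" where
  "vals G [] = {\<one>\<^bsub>G\<^esub>}"
| "vals G (b # bs) = {commutator G b y \<otimes>\<^bsub>G\<^esub> v | y v. y \<in> carrier G \<and> v \<in> vals G bs}"

context group
begin

lemma comm_closed: "x \<in> carrier G \<Longrightarrow> y \<in> carrier G \<Longrightarrow> commutator G x y \<in> carrier G"
  by (simp add: commutator_def)

lemma comm_one: "x \<in> carrier G \<Longrightarrow> commutator G x \<one> = \<one>"
  by (simp add: commutator_def)

lemma vals_carrier: "set bs \<subseteq> carrier G \<Longrightarrow> vals G bs \<subseteq> carrier G"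
  by (induction bs) (auto simp: comm_closed)

lemma vals_one: "set bs \<subseteq> carrier G \<Longrightarrow> \<one> \<in> vals G bs"
proof (induction bs)
  case Nil then show ?case by simp
next
  case (Cons b bs)
  then have "commutator G b \<one> \<otimes> \<one> = \<one>" by (simp add: comm_one)
  with Cons show ?case by (simp, metis one_closed)
qed

lemma eval_wrd_cong:
  "(\<forall>n\<ge>off. \<sigma> n = \<sigma>' n) \<Longrightarrow> eval_expr G \<sigma> (wrd G off bs) = eval_expr G \<sigma>' (wrd G off bs)"
proof (induction bs arbitrary: off)
  case Nil then show ?case by simp
next
  case (Cons b bs)
  have "eval_expr G \<sigma> (wrd G (Suc off) bs) = eval_expr G \<sigma>' (wrd G (Suc off) bs)"
    using Cons.prems by (intro Cons.IH) auto
  with Cons.prems show ?case by simp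
qed

lemma eval_wrd_carrier:
  "set bs \<subseteq> carrier G \<Longrightarrow> \<sigma> \<in> UNIV \<rightarrow> carrier G \<Longrightarrow> eval_expr G \<sigma> (wrd G off bs) \<in> carrier G"
  by (induction bs arbitrary: off) (auto simp: Pi_def)

lemma eval_wrd_cons:
  assumes "b \<in> carrier G" "set bs \<subseteq> carrier G" "\<sigma> \<in> UNIV \<rightarrow> carrier G"
  shows "eval_expr G \<sigma> (wrd G off (b # bs)) = commutator G b (\<sigma> off) \<otimes> eval_expr G \<sigma> (wrd G (Suc off) bs)"
proof -
  have s: "\<sigma> off \<in> carrier G" using assms(3) by auto
  have e: "eval_expr G \<sigma> (wrd G (Suc off) bs) \<in> carrier G" using eval_wrd_carrier assms by blast
  show ?thesis using s e assms(1) by (simp add: commutator_def m_assoc)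
qed

lemma vals_ConsI: "y \<in> carrier G \<Longrightarrow> v \<in> vals G bs \<Longrightarrow> commutator G b y \<otimes> v \<in> vals G (b # bs)"
  by auto

lemma vals_eq:
  "set bs \<subseteq> carrier G \<Longrightarrow> {eval_expr G \<sigma> (wrd G off bs) | \<sigma>. \<sigma> \<in> UNIV \<rightarrow> carrier G} = vals G bs"
proof (induction bs arbitrary: off)
  case Nil then show ?case by auto
next
  case (Cons b bs)
  have b: "b \<in> carrier G" and bs: "set bs \<subseteq> carrier G" using Cons.prems by auto
  note IH = Cons.IH[OF bs, of "Suc off"]
  show ?case
  proof
    show "{eval_expr G \<sigma> (wrd G off (b # bs)) | \<sigma>. \<sigma> \<in> UNIV \<rightarrow> carrier G} \<subseteq> vals G (b # bs)"
    proof clarify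
      fix \<sigma> :: "nat \<Rightarrow> 'a" assume s: "\<sigma> \<in> UNIV \<rightarrow> carrier G"
      have "eval_expr G \<sigma> (wrd G (Suc off) bs) \<in> vals G bs" using IH s by blast
      moreover have "\<sigma> off \<in> carrier G" using s by auto
      ultimately show "eval_expr G \<sigma> (wrd G off (b # bs)) \<in> vals G (b # bs)"
        using eval_wrd_cons[OF b bs s] by auto
    qed
  next
    show "vals G (b # bs) \<subseteq> {eval_expr G \<sigma> (wrd G off (b # bs)) | \<sigma>. \<sigma> \<in> UNIV \<rightarrow> carrier G}"
    proof
      fix w assume "w \<in> vals G (b # bs)"
      then obtain y v where y: "y \<in> carrier G" and v: "v \<in> vals G bs" and w: "w = commutator G b y \<otimes> v"
        by auto
      from v obtain \<sigma> where s: "\<sigma> \<in> UNIV \<rightarrow> carrier G" and ev: "v = eval_expr G \<sigma> (wrd G (Suc off) bs)"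
        using IH by blast
      define \<tau> where "\<tau> = \<sigma>(off := y)"
      have t: "\<tau> \<in> UNIV \<rightarrow> carrier G" using s y by (auto simp: \<tau>_def)
      have "eval_expr G \<tau> (wrd G (Suc off) bs) = v"
        unfolding ev by (rule eval_wrd_cong) (auto simp: \<tau>_def)
      moreover have "\<tau> off = y" by (simp add: \<tau>_def)
      ultimately have "eval_expr G \<tau> (wrd G off (b # bs)) = commutator G b y \<otimes> v"
        using eval_wrd_cons[OF b bs t, of off] by simp
      then have "w = eval_expr G \<tau> (wrd G off (b # bs))" using w by simp
      then show "w \<in> {eval_expr G \<sigma> (wrd G off (b # bs)) | \<sigma>. \<sigma> \<in> UNIV \<rightarrow> carrier G}"
        using t by blast
    qed
  qed
qed

lemma vals_gen:
  "set bs \<subseteq> carrier G \<Longrightarrow> b \<in> set bs \<Longrightarrow> y \<in> carrier G \<Longrightarrow> commutator G b y \<in> vals G bs"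
proof (induction bs)
  case Nil then show ?case by simp
next
  case (Cons c bs)
  show ?case
  proof (cases "b = c")
    case True
    have bc: "b \<in> carrier G" using Cons.prems by auto
    have "commutator G b y \<otimes> \<one> = commutator G b y" using bc Cons.prems(3) by (simp add: comm_closed)
    moreover have "\<one> \<in> vals G bs" using Cons.prems vals_one[of bs] by auto
    ultimately show ?thesis using True vals_ConsI[OF Cons.prems(3), of "\<one>" bs c] by simp
  next
    case False
    have bc: "b \<in> carrier G" using Cons.prems by auto
    have "commutator G b y \<in> vals G bs" using Cons False by auto
    moreover have "commutator G c \<one> \<otimes> commutator G b y = commutator G b y"
      using Cons.prems bc by (simp add: comm_one comm_closed)
    ultimately show ?thesis using vals_ConsI[OF one_closed, of "commutator G b y" bs c] by simp
  qed
qed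

lemma vals_append:
  "set xs \<subseteq> carrier G \<Longrightarrow> set ys \<subseteq> carrier G \<Longrightarrow> x \<in> vals G xs \<Longrightarrow> v \<in> vals G ys
   \<Longrightarrow> x \<otimes> v \<in> vals G (xs @ ys)"
proof (induction xs arbitrary: x)
  case Nil
  then have "v \<in> carrier G" by (meson subsetD vals_carrier)
  with Nil show ?case by simp
next
  case (Cons c xs)
  then obtain y w where y: "y \<in> carrier G" and w: "w \<in> vals G xs" and x: "x = commutator G c y \<otimes> w"
    by auto
  have "w \<otimes> v \<in> vals G (xs @ ys)" using Cons w by auto
  moreover have "x \<otimes> v = commutator G c y \<otimes> (w \<otimes> v)"
  proof -
    have wc: "w \<in> carrier G" using w Cons.prems vals_carrier[of xs] by auto
    have vc: "v \<in> carrier G" using Cons.prems vals_carrier[of ys] by auto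
    have cc: "commutator G c y \<in> carrier G" using y Cons.prems by (simp add: comm_closed)
    show ?thesis using x wc vc cc by (simp add: m_assoc)
  qed
  ultimately show ?case using vals_ConsI[OF y] by simp
qed

lemma comm_in_normal:
  assumes "K \<lhd> G" "x \<in> K" "y \<in> carrier G" shows "commutator G x y \<in> K"
proof -
  interpret N: normal K G by fact
  have xc: "x \<in> carrier G" using assms N.subset by auto
  have "inv y \<otimes> x \<otimes> inv (inv y) \<in> K" using N.inv_op_closed2[of "inv y" x] assms(2,3) by auto
  then have "inv y \<otimes> x \<otimes> y \<in> K" using assms(3) by simp
  then have "inv x \<otimes> (inv y \<otimes> x \<otimes> y) \<in> K" using assms(2) by (simp add: N.m_closed N.m_inv_closed)
  then show ?thesis using xc assms(3) by (simp add: commutator_def m_assoc)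
qed

lemma vals_normal:
  assumes "K \<lhd> G" shows "set bs \<subseteq> K \<Longrightarrow> vals G bs \<subseteq> K"
proof (induction bs)
  case Nil then show ?case using assms normal_imp_subgroup subgroup.one_closed by auto
next
  case (Cons b bs)
  have sg: "subgroup K G" using assms normal_imp_subgroup by blast
  show ?case
  proof
    fix w assume "w \<in> vals G (b # bs)"
    then obtain y v where y: "y \<in> carrier G" and v: "v \<in> vals G bs" and w: "w = commutator G b y \<otimes> v"
      by auto
    have "commutator G b y \<in> K" using comm_in_normal[OF assms _ y] Cons.prems by auto
    moreover have "v \<in> K" using Cons v by auto
    ultimately show "w \<in> K" using w subgroup.m_closed[OF sg] by simp
  qed
qed

lemma is_expr_wrd: "set bs \<subseteq> carrier G \<Longrightarrow> is_expr G (wrd G off bs)"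
  by (induction bs arbitrary: off) (auto simp: is_expr_def)

lemma inv_comm:
  assumes "b \<in> carrier G" "y \<in> carrier G"
  shows "inv (commutator G b y) = commutator G (inv y \<otimes> b \<otimes> y) (inv y)"
  using assms apply (simp add: commutator_def m_assoc inv_mult_group)
  by (simp add: m_assoc[symmetric])

lemma conj_closure_normal:
  assumes "K \<lhd> G" shows "conj_closure G K = K"
proof
  interpret N: normal K G by fact
  show "conj_closure G K \<subseteq> K"
  proof
    fix z assume "z \<in> conj_closure G K"
    then obtain x y where x: "x \<in> K" and y: "y \<in> carrier G" and z: "z = conj_elem G x y"
      unfolding conj_closure_def by blast
    have "inv y \<otimes> x \<otimes> inv (inv y) \<in> K" using N.inv_op_closed2[of "inv y" x] x y by auto
    then show "z \<in> K" using z y by (simp add: conj_elem_def)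
  qed
  show "K \<subseteq> conj_closure G K"
  proof
    fix x assume x: "x \<in> K"
    then have xc: "x \<in> carrier G" using N.subset by auto
    have "x = conj_elem G x \<one>" using xc by (simp add: conj_elem_def)
    then show "x \<in> conj_closure G K" unfolding conj_closure_def using x by blast
  qed
qed

lemma iter_comm_sub:
  assumes "K \<lhd> G" "C \<subseteq> carrier G" shows "iter_comm G K k C \<subseteq> K"
proof (induction k)
  case 0 then show ?case by simp
next
  case (Suc k)
  have sg: "subgroup K G" using assms normal_imp_subgroup by blast
  have "{commutator G x y | x y. x \<in> iter_comm G K k C \<and> y \<in> C} \<subseteq> K"
    using Suc comm_in_normal[OF assms(1)] assms(2) by blast
  then show ?case unfolding iter_comm.simps comm_set_def
    using generate_subgroup_incl[OF _ sg] by blast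
qed

lemma chain_stab:
  assumes "finite S" "\<And>n. V n \<subseteq> S" "\<And>n. V n \<subseteq> V (Suc n)"
  shows "\<exists>n. V (Suc n) \<subseteq> V n"
proof (rule ccontr)
  assume "\<not> ?thesis"
  then have ps: "\<And>n. V n \<subset> V (Suc n)" using assms(3) by blast
  have fin: "\<And>n. finite (V n)" using assms(1,2) finite_subset by blast
  have "\<And>n. card (V n) \<ge> n"
  proof -
    fix n show "card (V n) \<ge> n"
    proof (induction n)
      case 0 then show ?case by simp
    next
      case (Suc n)
      have "card (V n) < card (V (Suc n))" using psubset_card_mono[OF fin ps] .
      then show ?case using Suc by simp
    qed
  qed
  then have "card (V (Suc (card S))) \<ge> Suc (card S)" .
  moreover have "card (V (Suc (card S))) \<le> card S" using card_mono[OF assms(1) assms(2)] .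
  ultimately show False by simp
qed

lemma main_aux:
  assumes fin: "finite (carrier G)" and sb: "stabilizing_bound G M" and nK: "K \<lhd> G"
    and g: "g \<in> carrier G" and eta: "eta G M g K = K"
  shows "inducible G K"
proof -
  interpret N: normal K G by fact
  have sg: "subgroup K G" using nK normal_imp_subgroup by blast
  have Kc: "K \<subseteq> carrier G" using N.subset .
  define C where "C = conj_class G g"
  have Cc: "C \<subseteq> carrier G" unfolding C_def conj_class_def conj_elem_def using g by auto
  define gens where "gens = {commutator G x y | x y. x \<in> K \<and> y \<in> carrier G}"
  have cs: "comm_set G K (carrier G) = generate G gens" unfolding comm_set_def gens_def by simp
  have Kgen: "K \<subseteq> generate G gens"
  proof (cases M)
    case 0
    have cc: "conj_closure G (carrier G) = carrier G"
      using conj_closure_normal[OF normal_self] .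
    have "iter_comm G K M (carrier G) = iter_comm G K 1 (carrier G)"
      using sb unfolding stabilizing_bound_def using Kc cc conj_closure_normal[OF nK] 0 by blast
    then show ?thesis using 0 cs by simp
  next
    case (Suc m)
    have "K = comm_set G (iter_comm G K m C) C" using eta Suc unfolding eta_def C_def by simp
    also have "\<dots> \<subseteq> comm_set G K (carrier G)" unfolding comm_set_def
      using iter_comm_sub[OF nK Cc, of m] Cc by (intro mono_generate) blast
    finally show ?thesis using cs by simp
  qed
  have finK: "finite K" using fin Kc finite_subset by blast
  obtain ks where ks: "set ks = K" using finite_list[OF finK] by blast
  define V where "V n = vals G (concat (replicate n ks))" for n
  have setV: "set (concat (replicate n ks)) \<subseteq> K" for n using ks by auto
  have setVc: "set (concat (replicate n ks)) \<subseteq> carrier G" for n using setV Kc by blast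
  have ksc: "set ks \<subseteq> carrier G" using ks Kc by simp
  have VK: "V n \<subseteq> K" for n unfolding V_def using vals_normal[OF nK setV] .
  have Vc: "V n \<subseteq> carrier G" for n using VK Kc by blast
  have step: "x \<in> vals G ks \<Longrightarrow> v \<in> V n \<Longrightarrow> x \<otimes> v \<in> V (Suc n)" for x v n
    unfolding V_def using vals_append[OF ksc setVc] by simp
  have mono: "V n \<subseteq> V (Suc n)" for n
  proof
    fix v assume v: "v \<in> V n"
    have "\<one> \<otimes> v \<in> V (Suc n)" using step[OF vals_one[OF ksc] v] .
    moreover have "v \<in> carrier G" using v Vc by blast
    ultimately show "v \<in> V (Suc n)" by simp
  qed
  obtain n where stab: "V (Suc n) \<subseteq> V n" using chain_stab[of "carrier G" V, OF fin Vc mono] by blast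
  have gensc: "gens \<subseteq> carrier G" unfolding gens_def using Kc comm_closed by blast
  have gensV: "h \<in> gens \<Longrightarrow> h \<in> vals G ks" for h
    unfolding gens_def using vals_gen[OF ksc] ks by blast
  have closed: "\<forall>v \<in> V n. x \<otimes> v \<in> V n" if x: "x \<in> generate G gens" for x
    using x
  proof (induction rule: generate.induct)
    case one
    have "v \<in> V n \<Longrightarrow> \<one> \<otimes> v \<in> V n" for v
    proof -
      assume v: "v \<in> V n"
      then have "v \<in> carrier G" using Vc by blast
      then show ?thesis using v by simp
    qed
    then show ?case by blast
  next
    case (incl h) then show ?case using gensV step stab by blast
  next
    case (inv h)
    then obtain b y where b: "b \<in> K" and y: "y \<in> carrier G" and h: "h = commutator G b y"
      unfolding gens_def by blast
    have bc: "b \<in> carrier G" using b Kc by auto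
    have "inv y \<otimes> b \<otimes> inv (inv y) \<in> K" using N.inv_op_closed2[of "inv y" b] b y by auto
    then have "inv y \<otimes> b \<otimes> y \<in> K" using y by simp
    then have "inv h \<in> gens" unfolding h inv_comm[OF bc y] gens_def using y by blast
    then show ?case using gensV step stab by blast
  next
    case (eng h1 h2)
    have c1: "h1 \<in> carrier G" using generate_in_carrier[OF gensc eng.hyps(1)] .
    have c2: "h2 \<in> carrier G" using generate_in_carrier[OF gensc eng.hyps(2)] .
    show ?case
    proof
      fix v assume v: "v \<in> V n"
      have "h1 \<otimes> (h2 \<otimes> v) \<in> V n" using eng.IH v by blast
      then show "h1 \<otimes> h2 \<otimes> v \<in> V n" using c1 c2 v Vc by (simp add: m_assoc subset_iff)
    qed
  qed
  have "K \<subseteq> V n"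
  proof
    fix x assume x: "x \<in> K"
    have "\<one> \<in> V n" unfolding V_def using vals_one[OF setVc] .
    then have "x \<otimes> \<one> \<in> V n" using closed Kgen x by blast
    then show "x \<in> V n" using x Kc by auto
  qed
  then have "K = V n" using VK by blast
  then have "K = {eval_expr G \<sigma> (wrd G 0 (concat (replicate n ks))) | \<sigma>. \<sigma> \<in> UNIV \<rightarrow> carrier G}"
    unfolding V_def using vals_eq[OF setVc] by simp
  then show ?thesis unfolding inducible_def using is_expr_wrd[OF setVc] by blast
qed

end

theorem lemma4p2:
  fixes G (structure) and K :: "'a set" and M :: nat and g :: 'a
  assumes "group G" and "finite (carrier G)"
    and "stabilizing_bound G M"
    and "K \<lhd> G"
    and "g \<in> carrier G"
    and "eta G M g K = K"
  shows "inducible G K"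
  using group.main_aux[OF assms(1) assms(2-6)] .

end
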